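(* Let $(Q,B,\mu)$ be a measure space with a non-trivial $\sigma$-finite measure $\mu$, let $0<a<b\le1$, and let $\psi:(a,b)\to(0,\infty)$ be continuous with $\inf_{p\in(a,b)}\psi(p)>0$. Then the quasi-Grand Lebesgue space $G\psi_{a,b}$ is complete with respect to the quasi-distance $\rho(x,y)=\|x-y\|_{G\psi_{a,b}}$; i.e. every Cauchy sequence for $\rho$ converges in $\rho$ to an element of $G\psi_{a,b}$.
   Context: For $p>0$, $\|f\|_p=\left(\int_Q|f|^p\,d\mu\right)^{1/p}$. $G\psi_{a,b}$ is the space of measurable $f:Q\to\mathbb R$ (modulo $\mu$-a.e. equality) with $\|f\|_{G\psi_{a,b}}:=\sup_{p\in(a,b)}\|f\|_p/\psi(p)<\infty$. *)

theory Defs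
  imports "HOL-Analysis.Analysis"
begin

definition Lp_qnorm :: "'a measure \<Rightarrow> real \<Rightarrow> ('a \<Rightarrow> real) \<Rightarrow> ennreal" where
  "Lp_qnorm M p f =
     (let I = (\<integral>\<^sup>+ x. ennreal (\<bar>f x\<bar> powr p) \<partial>M)
      in if I = \<infinity> then \<infinity> else ennreal ((enn2real I) powr (1 / p)))"

definition G_qnorm :: "'a measure \<Rightarrow> (real \<Rightarrow> real) \<Rightarrow> real \<Rightarrow> real \<Rightarrow> ('a \<Rightarrow> real) \<Rightarrow> ennreal" where
  "G_qnorm M \<psi> a b f = (SUP p\<in>{a<..<b}. Lp_qnorm M p f / ennreal (\<psi> p))"

text \<open>The space G psi_{a,b} (as a set of representatives; a.e. equality is irrelevant for
  completeness as stated since the quasi-distance does not see it).\<close>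
definition G_space :: "'a measure \<Rightarrow> (real \<Rightarrow> real) \<Rightarrow> real \<Rightarrow> real \<Rightarrow> ('a \<Rightarrow> real) set" where
  "G_space M \<psi> a b = {f. f \<in> borel_measurable M \<and> G_qnorm M \<psi> a b f < \<infinity>}"

end

theory Submission
  imports Defs
begin
lemma div_le: fixes x :: ennreal assumes "y > 0" "e \<ge> 0"
  shows "x / ennreal y \<le> ennreal e \<longleftrightarrow> x \<le> ennreal (e * y)"
proof (cases x rule: ennreal_cases)
  case (real r)
  then show ?thesis using assms by (simp add: divide_ennreal pos_divide_le_eq)
next
  case top
  have "top / ennreal y = top" using assms by (simp add: ennreal_divide_eq_top_iff)
  then show ?thesis using top by (simp add: top_unique)
qed

lemma pw: fixes x y p :: real assumes "0\<le>x" "0\<le>y" "0<p" "p\<le>1"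
  shows "(x+y) powr p \<le> x powr p + y powr p"
proof (cases "x + y = 0")
  case True then show ?thesis using assms by simp
next
  case False
  define s where "s = x + y"
  have s: "s > 0" using False assms s_def by simp
  have 1: "x / s \<le> (x/s) powr p" using powr_mono'[of p 1 "x/s"] assms s s_def by simp
  have 2: "y / s \<le> (y/s) powr p" using powr_mono'[of p 1 "y/s"] assms s s_def by simp
  have "1 \<le> (x/s) powr p + (y/s) powr p" using 1 2 s s_def
    by (metis add_mono add_divide_distrib divide_self less_irrefl)
  also have "\<dots> = (x powr p + y powr p) / s powr p" by (simp add: powr_divide add_divide_distrib)
  finally show ?thesis using s s_def by (simp add: le_divide_eq)
qed

lemma Lp_le: assumes "p > 0" "c \<ge> 0"
  shows "Lp_qnorm M p h \<le> ennreal c \<longleftrightarrow> (\<integral>\<^sup>+ x. ennreal (\<bar>h x\<bar> powr p) \<partial>M) \<le> ennreal (c powr p)"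
proof (cases "(\<integral>\<^sup>+ x. ennreal (\<bar>h x\<bar> powr p) \<partial>M)" rule: ennreal_cases)
  case (real r)
  have "r powr (1/p) \<le> c \<longleftrightarrow> r \<le> c powr p"
  proof
    assume "r powr (1/p) \<le> c"
    then have "(r powr (1/p)) powr p \<le> c powr p" using assms real by (intro powr_mono2) auto
    then show "r \<le> c powr p" using assms real by (simp add: powr_powr)
  next
    assume "r \<le> c powr p"
    then have "r powr (1/p) \<le> (c powr p) powr (1/p)" using assms real by (intro powr_mono2) auto
    then show "r powr (1/p) \<le> c" using assms real by (simp add: powr_powr)
  qed
  then show ?thesis using real assms unfolding Lp_qnorm_def by (simp add: Let_def)
next
  case top
  then show ?thesis unfolding Lp_qnorm_def by (simp add: Let_def top_unique)
qed

lemma G_le: assumes "a \<ge> 0" "\<forall>p\<in>{a<..<b}. \<psi> p > 0" "e \<ge> 0"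
  shows "G_qnorm M \<psi> a b h \<le> ennreal e \<longleftrightarrow>
    (\<forall>p\<in>{a<..<b}. (\<integral>\<^sup>+ x. ennreal (\<bar>h x\<bar> powr p) \<partial>M) \<le> ennreal ((e * \<psi> p) powr p))"
  unfolding G_qnorm_def SUP_le_iff
proof (intro ball_cong refl)
  fix p assume p: "p \<in> {a<..<b}"
  then have "\<psi> p > 0" "p > 0" using assms by auto
  then show "Lp_qnorm M p h / ennreal (\<psi> p) \<le> ennreal e \<longleftrightarrow>
    (\<integral>\<^sup>+ x. ennreal (\<bar>h x\<bar> powr p) \<partial>M) \<le> ennreal ((e * \<psi> p) powr p)"
    using assms by (simp add: div_le Lp_le)
qed

lemma tri: assumes "0 < p" "p \<le> 1" and [measurable]: "u \<in> borel_measurable M" "v \<in> borel_measurable M"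
  shows "(\<integral>\<^sup>+ x. ennreal (\<bar>u x + v x\<bar> powr p) \<partial>M) \<le>
    (\<integral>\<^sup>+ x. ennreal (\<bar>u x\<bar> powr p) \<partial>M) + (\<integral>\<^sup>+ x. ennreal (\<bar>v x\<bar> powr p) \<partial>M)"
proof -
  have "(\<integral>\<^sup>+ x. ennreal (\<bar>u x + v x\<bar> powr p) \<partial>M) \<le>
     (\<integral>\<^sup>+ x. ennreal (\<bar>u x\<bar> powr p) + ennreal (\<bar>v x\<bar> powr p) \<partial>M)"
  proof (intro nn_integral_mono)
    fix x
    have "\<bar>u x + v x\<bar> powr p \<le> (\<bar>u x\<bar> + \<bar>v x\<bar>) powr p"
      using assms by (intro powr_mono2) (auto simp: abs_triangle_ineq)
    also have "\<dots> \<le> \<bar>u x\<bar> powr p + \<bar>v x\<bar> powr p" using assms by (intro pw) auto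
    finally show "ennreal (\<bar>u x + v x\<bar> powr p) \<le> ennreal (\<bar>u x\<bar> powr p) + ennreal (\<bar>v x\<bar> powr p)"
      by (simp add: ennreal_plus[symmetric] del: ennreal_plus)
  qed
  also have "\<dots> = (\<integral>\<^sup>+ x. ennreal (\<bar>u x\<bar> powr p) \<partial>M) + (\<integral>\<^sup>+ x. ennreal (\<bar>v x\<bar> powr p) \<partial>M)"
    by (intro nn_integral_add) auto
  finally show ?thesis .
qed

theorem theorem4p2:
  fixes M :: "'a measure" and \<psi> :: "real \<Rightarrow> real" and a b :: real
    and f :: "nat \<Rightarrow> 'a \<Rightarrow> real"
  assumes "sigma_finite_measure M"
    and "emeasure M (space M) \<noteq> 0"
    and "0 < a" and "a < b" and "b \<le> 1"
    and "continuous_on {a<..<b} \<psi>"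
    and "\<forall>p\<in>{a<..<b}. \<psi> p > 0"
    and "(INF p\<in>{a<..<b}. \<psi> p) > 0"
    and "\<forall>n. f n \<in> G_space M \<psi> a b"
    and "\<forall>e>0. \<exists>N. \<forall>m\<ge>N. \<forall>n\<ge>N. G_qnorm M \<psi> a b (\<lambda>x. f m x - f n x) < ennreal e"
  shows "\<exists>g\<in>G_space M \<psi> a b. (\<lambda>n. G_qnorm M \<psi> a b (\<lambda>x. f n x - g x)) \<longlonglongrightarrow> 0"
proof -
  note psi = assms(7)
  have fm[measurable]: "\<And>n. f n \<in> borel_measurable M" using assms(9) unfolding G_space_def by auto
  have Gle: "\<And>h e. e \<ge> 0 \<Longrightarrow> G_qnorm M \<psi> a b h \<le> ennreal e \<longleftrightarrow>
    (\<forall>p\<in>{a<..<b}. (\<integral>\<^sup>+ x. ennreal (\<bar>h x\<bar> powr p) \<partial>M) \<le> ennreal ((e * \<psi> p) powr p))"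
    using G_le[of a b \<psi>] assms(3) psi by auto
  have C: "\<exists>N. \<forall>m\<ge>N. \<forall>n\<ge>N. \<forall>p\<in>{a<..<b}. (\<integral>\<^sup>+ x. ennreal (\<bar>f m x - f n x\<bar> powr p) \<partial>M)
     \<le> ennreal ((e * \<psi> p) powr p)" if e: "e > 0" for e
  proof -
    obtain N where N: "\<forall>m\<ge>N. \<forall>n\<ge>N. G_qnorm M \<psi> a b (\<lambda>x. f m x - f n x) < ennreal e"
      using assms(10) e by blast
    show ?thesis
    proof (intro exI[of _ N] allI impI)
      fix m n :: nat assume "N \<le> m" "N \<le> n"
      then have "G_qnorm M \<psi> a b (\<lambda>x. f m x - f n x) \<le> ennreal e" using N less_imp_le by blast
      then show "\<forall>p\<in>{a<..<b}. (\<integral>\<^sup>+ x. ennreal (\<bar>f m x - f n x\<bar> powr p) \<partial>M)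
       \<le> ennreal ((e * \<psi> p) powr p)" using Gle[of e] e by simp
    qed
  qed
  define p0 where "p0 = (a + b) / 2"
  have p0: "p0 \<in> {a<..<b}" "0 < p0" "p0 \<le> 1" using assms(3-5) p0_def by auto
  have psi0: "\<psi> p0 > 0" using psi p0 by auto
  have C0: "\<exists>N. \<forall>m\<ge>N. \<forall>n\<ge>N. (\<integral>\<^sup>+ x. ennreal (\<bar>f m x - f n x\<bar> powr p0) \<partial>M) \<le> ennreal \<epsilon>"
    if eps: "\<epsilon> > 0" for \<epsilon>
  proof -
    define e where "e = \<epsilon> powr (1/p0) / \<psi> p0"
    have "e > 0" using eps psi0 e_def by simp
    then obtain N where N: "\<forall>m\<ge>N. \<forall>n\<ge>N. \<forall>p\<in>{a<..<b}. (\<integral>\<^sup>+ x. ennreal (\<bar>f m x - f n x\<bar> powr p) \<partial>M)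
     \<le> ennreal ((e * \<psi> p) powr p)" using C by blast
    have "(e * \<psi> p0) powr p0 = \<epsilon>" using psi0 eps p0 by (simp add: e_def powr_powr)
    note eq = this
    have "\<forall>m\<ge>N. \<forall>n\<ge>N. (\<integral>\<^sup>+ x. ennreal (\<bar>f m x - f n x\<bar> powr p0) \<partial>M) \<le> ennreal \<epsilon>"
    proof (intro allI impI)
      fix m n :: nat assume "N \<le> m" "N \<le> n"
      then have "(\<integral>\<^sup>+ x. ennreal (\<bar>f m x - f n x\<bar> powr p0) \<partial>M) \<le> ennreal ((e * \<psi> p0) powr p0)"
        using N p0(1) by blast
      then show "(\<integral>\<^sup>+ x. ennreal (\<bar>f m x - f n x\<bar> powr p0) \<partial>M) \<le> ennreal \<epsilon>" by (simp only: eq)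
    qed
    then show ?thesis by blast
  qed
  have ex: "\<forall>k. \<exists>N. \<forall>m\<ge>N. \<forall>n\<ge>N. (\<integral>\<^sup>+ x. ennreal (\<bar>f m x - f n x\<bar> powr p0) \<partial>M) \<le> ennreal ((1/2)^k)"
    using C0 by (intro allI C0) simp
  obtain N where N0: "\<forall>k. \<forall>m\<ge>N k. \<forall>n\<ge>N k. (\<integral>\<^sup>+ x. ennreal (\<bar>f m x - f n x\<bar> powr p0) \<partial>M) \<le> ennreal ((1/2)^k)"
    using choice[OF ex] by blast
  have N: "\<And>k m n. m \<ge> N k \<Longrightarrow> n \<ge> N k \<Longrightarrow>
      (\<integral>\<^sup>+ x. ennreal (\<bar>f m x - f n x\<bar> powr p0) \<partial>M) \<le> ennreal ((1/2)^k)"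
    using N0 by blast
  define r where "r k = (\<Sum>j\<le>k. N j) + k" for k
  have rN: "N k \<le> r k" for k unfolding r_def
    using member_le_sum[of k "{..k}" N] by auto
  have rk: "k \<le> r k" for k unfolding r_def by simp
  have rsuc: "r k \<le> r (Suc k)" for k unfolding r_def by simp
  define s where "s k = f (r k)" for k
  define d where "d k x = s (Suc k) x - s k x" for k x
  have sm[measurable]: "s k \<in> borel_measurable M" for k unfolding s_def by simp
  have dm[measurable]: "d k \<in> borel_measurable M" for k unfolding d_def by simp
  have dI: "(\<integral>\<^sup>+ x. ennreal (\<bar>d k x\<bar> powr p0) \<partial>M) \<le> ennreal ((1/2)^k)" for k
    unfolding d_def s_def by (rule N[OF order.trans[OF rN rsuc] rN])
  have "(\<integral>\<^sup>+ x. (\<Sum>k. ennreal (\<bar>d k x\<bar> powr p0)) \<partial>M) = (\<Sum>k. (\<integral>\<^sup>+ x. ennreal (\<bar>d k x\<bar> powr p0) \<partial>M))"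
    by (intro nn_integral_suminf) auto
  also have "\<dots> \<le> (\<Sum>k. ennreal ((1/2)^k))"
    by (rule suminf_le[OF dI summableI summableI])
  also have "\<dots> = ennreal (\<Sum>k. (1/2::real)^k)"
    by (intro suminf_ennreal2) (auto intro: summable_geometric)
  also have "\<dots> = ennreal 2"
    using suminf_geometric[of "1/2::real"] by simp
  finally have "(\<integral>\<^sup>+ x. (\<Sum>k. ennreal (\<bar>d k x\<bar> powr p0)) \<partial>M) \<noteq> \<infinity>"
    by (auto simp: top_unique)
  then have AEfin: "AE x in M. (\<Sum>k. ennreal (\<bar>d k x\<bar> powr p0)) \<noteq> \<infinity>"
    by (intro nn_integral_PInf_AE) auto
  have conv: "AE x in M. convergent (\<lambda>k. s k x)"
    using AEfin
  proof eventually_elim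
    case (elim x)
    have sp: "summable (\<lambda>k. \<bar>d k x\<bar> powr p0)"
      using elim by (intro summable_suminf_not_top) auto
    then have "(\<lambda>k. \<bar>d k x\<bar> powr p0) \<longlonglongrightarrow> 0" by (rule summable_LIMSEQ_zero)
    then have ev: "eventually (\<lambda>k. \<bar>d k x\<bar> powr p0 < 1) sequentially"
      by (rule order_tendstoD) simp
    have "eventually (\<lambda>k. norm (d k x) \<le> \<bar>d k x\<bar> powr p0) sequentially"
      using ev
    proof eventually_elim
      case (elim k)
      have "\<bar>d k x\<bar> \<le> 1"
      proof (rule ccontr)
        assume "\<not> \<bar>d k x\<bar> \<le> 1"
        then have "1 \<le> \<bar>d k x\<bar> powr p0" using p0 by (simp add: ge_one_powr_ge_zero)
        then show False using elim by simp
      qed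
      then have "\<bar>d k x\<bar> powr 1 \<le> \<bar>d k x\<bar> powr p0" using p0 by (intro powr_mono') auto
      then show ?case by (cases "d k x = 0") auto
    qed
    then have "summable (\<lambda>k. d k x)" using sp by (rule summable_comparison_test_ev)
    then have "convergent (\<lambda>n. \<Sum>k<n. d k x)" by (simp add: summable_iff_convergent)
    then have "convergent (\<lambda>n. s 0 x + (\<Sum>k<n. d k x))" by (intro convergent_add convergent_const)
    moreover have "s 0 x + (\<Sum>k<n. d k x) = s n x" for n
      unfolding d_def by (induct n) auto
    ultimately show ?case by simp
  qed
  define g where "g x = lim (\<lambda>k. s k x)" for x
  have gm[measurable]: "g \<in> borel_measurable M" unfolding g_def by measurable
  have lim: "AE x in M. (\<lambda>k. s k x) \<longlonglongrightarrow> g x"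
    using conv by eventually_elim (simp add: g_def convergent_LIMSEQ_iff)
  have fatou: "(\<integral>\<^sup>+ x. ennreal (\<bar>f n x - g x\<bar> powr p) \<partial>M) \<le>
      liminf (\<lambda>k. (\<integral>\<^sup>+ x. ennreal (\<bar>f n x - s k x\<bar> powr p) \<partial>M))" if p: "p > 0" for n p
  proof -
    have "(\<integral>\<^sup>+ x. ennreal (\<bar>f n x - g x\<bar> powr p) \<partial>M) =
        (\<integral>\<^sup>+ x. liminf (\<lambda>k. ennreal (\<bar>f n x - s k x\<bar> powr p)) \<partial>M)"
    proof (intro nn_integral_cong_AE)
      show "AE x in M. ennreal (\<bar>f n x - g x\<bar> powr p) = liminf (\<lambda>k. ennreal (\<bar>f n x - s k x\<bar> powr p))"
        using lim
      proof eventually_elim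
        case (elim x)
        have "(\<lambda>k. ennreal (\<bar>f n x - s k x\<bar> powr p)) \<longlonglongrightarrow> ennreal (\<bar>f n x - g x\<bar> powr p)"
          using elim p by (intro tendsto_ennrealI tendsto_powr' tendsto_intros) auto
        from lim_imp_Liminf[OF trivial_limit_sequentially this] show ?case by (rule sym)
      qed
    qed
    also have "\<dots> \<le> liminf (\<lambda>k. (\<integral>\<^sup>+ x. ennreal (\<bar>f n x - s k x\<bar> powr p) \<partial>M))"
      by (intro nn_integral_liminf) auto
    finally show ?thesis .
  qed
  have key: "\<exists>N. \<forall>n\<ge>N. \<forall>p\<in>{a<..<b}. (\<integral>\<^sup>+ x. ennreal (\<bar>f n x - g x\<bar> powr p) \<partial>M)
     \<le> ennreal ((e * \<psi> p) powr p)" if e: "e > 0" for e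
  proof -
    obtain Ne where Ne: "\<forall>m\<ge>Ne. \<forall>n\<ge>Ne. \<forall>p\<in>{a<..<b}. (\<integral>\<^sup>+ x. ennreal (\<bar>f m x - f n x\<bar> powr p) \<partial>M)
     \<le> ennreal ((e * \<psi> p) powr p)" using C e by blast
    show ?thesis
    proof (intro exI[of _ Ne] allI impI ballI)
      fix n p assume n: "Ne \<le> n" and p: "p \<in> {a<..<b}"
      have "eventually (\<lambda>k. (\<integral>\<^sup>+ x. ennreal (\<bar>f n x - s k x\<bar> powr p) \<partial>M) \<le> ennreal ((e * \<psi> p) powr p)) sequentially"
        using eventually_ge_at_top[of Ne]
      proof eventually_elim
        case (elim k)
        then show ?case using Ne n p rk[of k] unfolding s_def by auto
      qed
      then have "liminf (\<lambda>k. (\<integral>\<^sup>+ x. ennreal (\<bar>f n x - s k x\<bar> powr p) \<partial>M)) \<le> ennreal ((e * \<psi> p) powr p)"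
        by (intro Liminf_le) auto
      then show "(\<integral>\<^sup>+ x. ennreal (\<bar>f n x - g x\<bar> powr p) \<partial>M) \<le> ennreal ((e * \<psi> p) powr p)"
        using fatou[of p n] p assms(3) by auto
    qed
  qed
  have key2: "\<exists>N. \<forall>n\<ge>N. G_qnorm M \<psi> a b (\<lambda>x. f n x - g x) \<le> ennreal e" if e: "e > 0" for e
    using key[OF e] Gle[of e] e by auto
  obtain N1 where N1: "\<forall>n\<ge>N1. \<forall>p\<in>{a<..<b}. (\<integral>\<^sup>+ x. ennreal (\<bar>f n x - g x\<bar> powr p) \<partial>M)
     \<le> ennreal ((1 * \<psi> p) powr p)" using key[of 1] by auto
  have "G_qnorm M \<psi> a b (f N1) < \<infinity>" using assms(9) unfolding G_space_def by auto
  then obtain K where K: "K \<ge> 0" "G_qnorm M \<psi> a b (f N1) = ennreal K"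
    using less_top_ennreal by auto
  have KI: "\<forall>p\<in>{a<..<b}. (\<integral>\<^sup>+ x. ennreal (\<bar>f N1 x\<bar> powr p) \<partial>M) \<le> ennreal ((K * \<psi> p) powr p)"
    using Gle[of K "f N1"] K by simp
  define E where "E = 2 powr (1/a) * (K + 1)"
  have E0: "E \<ge> 0" unfolding E_def using K by simp
  have "G_qnorm M \<psi> a b g \<le> ennreal E"
    unfolding Gle[OF E0]
  proof
    fix p assume p: "p \<in> {a<..<b}"
    have pp: "0 < p" "p \<le> 1" "a < p" using p assms(3-5) by auto
    have ps: "\<psi> p > 0" using psi p by auto
    have "(\<integral>\<^sup>+ x. ennreal (\<bar>g x\<bar> powr p) \<partial>M) = (\<integral>\<^sup>+ x. ennreal (\<bar>f N1 x + (g x - f N1 x)\<bar> powr p) \<partial>M)"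
      by simp
    also have "\<dots> \<le> (\<integral>\<^sup>+ x. ennreal (\<bar>f N1 x\<bar> powr p) \<partial>M) + (\<integral>\<^sup>+ x. ennreal (\<bar>g x - f N1 x\<bar> powr p) \<partial>M)"
      using pp by (intro tri) auto
    also have "(\<integral>\<^sup>+ x. ennreal (\<bar>g x - f N1 x\<bar> powr p) \<partial>M) = (\<integral>\<^sup>+ x. ennreal (\<bar>f N1 x - g x\<bar> powr p) \<partial>M)"
      by (simp add: abs_minus_commute)
    also have "(\<integral>\<^sup>+ x. ennreal (\<bar>f N1 x\<bar> powr p) \<partial>M) + \<dots> \<le> ennreal ((K * \<psi> p) powr p) + ennreal ((1 * \<psi> p) powr p)"
      using KI N1 p by (intro add_mono) auto
    also have "\<dots> = ennreal ((K * \<psi> p) powr p + \<psi> p powr p)" by simp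
    also have "\<dots> \<le> ennreal ((E * \<psi> p) powr p)"
    proof (intro ennreal_leI)
      have "(K * \<psi> p) powr p \<le> ((K + 1) * \<psi> p) powr p" using K ps pp by (intro powr_mono2) auto
      moreover have "\<psi> p powr p \<le> ((K + 1) * \<psi> p) powr p" using K ps pp by (intro powr_mono2) auto
      moreover have "2 \<le> (2 powr (1/a)) powr p"
      proof -
        have "(2::real) powr 1 \<le> 2 powr (p / a)" using pp assms(3) by (intro powr_mono) auto
        then show ?thesis by (simp add: powr_powr)
      qed
      moreover have "(E * \<psi> p) powr p = (2 powr (1/a)) powr p * ((K + 1) * \<psi> p) powr p"
        unfolding E_def using K ps by (simp add: powr_mult mult.assoc)
      moreover have "((K + 1) * \<psi> p) powr p \<ge> 0" by simp
      ultimately show "(K * \<psi> p) powr p + \<psi> p powr p \<le> (E * \<psi> p) powr p"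
        using mult_right_mono[of 2 "(2 powr (1/a)) powr p" "((K + 1) * \<psi> p) powr p"] by linarith
    qed
    finally show "(\<integral>\<^sup>+ x. ennreal (\<bar>g x\<bar> powr p) \<partial>M) \<le> ennreal ((E * \<psi> p) powr p)" .
  qed
  then have gG: "g \<in> G_space M \<psi> a b" unfolding G_space_def using gm
    using le_less_trans[OF _ ennreal_less_top] by auto
  have "(\<lambda>n. G_qnorm M \<psi> a b (\<lambda>x. f n x - g x)) \<longlonglongrightarrow> 0"
  proof (rule order_tendstoI)
    fix y :: ennreal assume "y < 0" then show "eventually (\<lambda>n. y < G_qnorm M \<psi> a b (\<lambda>x. f n x - g x)) sequentially"
      by simp
  next
    fix y :: ennreal assume y: "0 < y"
    obtain z where z: "0 < z" "z < y" using dense[OF y] by auto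
    then have "z < top" using top_greatest le_less_trans by (metis order.strict_trans2)
    then obtain e where e: "e \<ge> 0" "z = ennreal e" using less_top_ennreal by auto
    then have "e > 0" using z by simp
    then obtain Nn where "\<forall>n\<ge>Nn. G_qnorm M \<psi> a b (\<lambda>x. f n x - g x) \<le> ennreal e" using key2 by blast
    then show "eventually (\<lambda>n. G_qnorm M \<psi> a b (\<lambda>x. f n x - g x) < y) sequentially"
      unfolding eventually_sequentially using z e by (meson le_less_trans)
  qed
  then show ?thesis using gG by blast
qed
end
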